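(* Let $\delta>0$, let $Y_0\in\mathbb R^d$ with $\|Y_0\|=1$ and all coordinates $>\delta$, let $n>0$ and $X_0=nY_0$, and let $(X_k)$ be the chain $X_k=A_{I_k}X_{k-1}+b_{I_k}(Z_k)$. Let $\mathbb E_Z[X_k]$ denote the expectation of $X_k$ with respect to $Z_1,\dots,Z_k$ only (i.e. conditional on $I_1,\dots,I_k$). Then there exists a constant $c>0$, independent of $k$ and $n$, such that $$\mathbb P\left[\left|\ln\left(\frac{\|\mathbb E_Z[X_k]\|}{n}\right)-k\alpha\right|\geq t\sqrt k\right]\leq 2e^{-ct^2}$$ for all $t>0$ and all $k$ sufficiently large.
   Context: $d\ge2$; $P=(p_{ij})$ is the transition matrix of a connected network on $\{1,\dots,d\}$ without loops ($p_{ii}=0$, irreducible). For $x\in\mathbb R^d$, $\hat x_i=\sum_j p_{ij}x_j$. Fix $e_1,\dots,e_d\in(0,1)$ and $\sigma_1,\dots,\sigma_d>0$. $A_i$ is the linear map with $(A_ix)_j=x_j$ for $j\ne i$ and $(A_ix)_i=e_i\hat x_i$; $b_i:\mathbb R\to\mathbb R^d$ has $(b_i(z))_i=\sigma_iz$ and other coordinates $0$. $I_1,Z_1,I_2,Z_2,\dots$ are independent, $I_k$ uniform on $\{1,\dots,d\}$, $Z_k\sim\gamma$, where $\gamma$ is an absolutely continuous probability measure on $\mathbb R$ with mean zero. $\|\cdot\|$ is the Euclidean norm. Let $\mathcal S$ be the set of unit vectors with strictly positive coordinates and let $\nu$ be the unique probability measure on $\mathcal S$ that is the limiting law (for any starting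 point in $\mathcal S$) of the chain $Y_k=A_{I_k}Y_{k-1}/\|A_{I_k}Y_{k-1}\|$. Define $\alpha:=\mathbb E[\ln\|A_I\overline Y_0\|]$, where $\overline Y_0\sim\nu$ and $I$ is uniform on $\{1,\dots,d\}$, independent; then $\alpha\in(-\infty,0)$. *)

theory Defs
  imports "HOL-Probability.Probability"
begin

text \<open>Coordinates are indexed by a finite type 'n with CARD('n) = d.
  P is a real matrix (rows: P $ i), e and sigma are vectors of parameters.\<close>

definition hatx :: "real^'n^'n \<Rightarrow> real^'n \<Rightarrow> 'n \<Rightarrow> real" where
  "hatx P x i = (\<Sum>j\<in>UNIV. P $ i $ j * x $ j)"

definition Amap :: "real^'n^'n \<Rightarrow> real^'n \<Rightarrow> 'n \<Rightarrow> real^'n \<Rightarrow> real^'n" where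
  "Amap P e i x = (\<chi> j. if j = i then e $ i * hatx P x i else x $ j)"

definition bmap :: "real^'n \<Rightarrow> 'n \<Rightarrow> real \<Rightarrow> real^'n" where
  "bmap \<sigma> i z = (\<chi> j. if j = i then \<sigma> $ i * z else 0)"

definition transition_matrix :: "real^'n^'n \<Rightarrow> bool" where
  "transition_matrix P \<longleftrightarrow> (\<forall>i j. 0 \<le> P $ i $ j) \<and> (\<forall>i. (\<Sum>j\<in>UNIV. P $ i $ j) = 1)"

definition irreducible_no_loops :: "real^'n^'n \<Rightarrow> bool" where
  "irreducible_no_loops P \<longleftrightarrow> (\<forall>i. P $ i $ i = 0) \<and>
     (\<forall>i j. (i, j) \<in> {(a, b). P $ a $ b > 0}\<^sup>+)"

definition Spos :: "(real^'n) set" where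
  "Spos = {y. norm y = 1 \<and> (\<forall>i. 0 < y $ i)}"

text \<open>Projective chain Y_k driven by the index sequence is = [I_1, ..., I_k].\<close>
definition Ychain :: "real^'n^'n \<Rightarrow> real^'n \<Rightarrow> 'n list \<Rightarrow> real^'n \<Rightarrow> real^'n" where
  "Ychain P e is y = fold (\<lambda>i v. (1 / norm (Amap P e i v)) *\<^sub>R Amap P e i v) is y"

definition Ilaw :: "nat \<Rightarrow> 'n list pmf" where
  "Ilaw k = pmf_of_set {is. length is = k}"

definition weak_conv_vec :: "(nat \<Rightarrow> (real^'n) measure) \<Rightarrow> (real^'n) measure \<Rightarrow> bool" where
  "weak_conv_vec M N \<longleftrightarrow>
     (\<forall>f. continuous_on UNIV f \<longrightarrow> bounded (range f) \<longrightarrow>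
        (\<lambda>k. \<integral>x. (f x :: real) \<partial>M k) \<longlonglongrightarrow> (\<integral>x. f x \<partial>N))"

text \<open>alpha = E[ln |A_I Ybar_0|], Ybar_0 ~ nu, I uniform and independent.\<close>
definition alpha_const :: "real^'n^'n \<Rightarrow> real^'n \<Rightarrow> (real^'n) measure \<Rightarrow> real" where
  "alpha_const P e \<nu> = (\<integral>y. (\<Sum>i\<in>UNIV. ln (norm (Amap P e i y))) / real CARD('n) \<partial>\<nu>)"

text \<open>The affine chain X_k = A_{I_k} X_{k-1} + b_{I_k}(Z_k), with I_{j+1} = is ! j, Z_{j+1} = zs j.\<close>
fun Xchain :: "real^'n^'n \<Rightarrow> real^'n \<Rightarrow> real^'n \<Rightarrow> real^'n \<Rightarrow> 'n list \<Rightarrow> (nat \<Rightarrow> real) \<Rightarrow> nat \<Rightarrow> real^'n" where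
  "Xchain P e \<sigma> x0 is zs 0 = x0"
| "Xchain P e \<sigma> x0 is zs (Suc k) =
     Amap P e (is ! k) (Xchain P e \<sigma> x0 is zs k) + bmap \<sigma> (is ! k) (zs k)"

text \<open>E_Z[X_k]: expectation over Z_1..Z_k (i.i.d. gamma) for fixed I_1..I_k.\<close>
definition EZ_X :: "real^'n^'n \<Rightarrow> real^'n \<Rightarrow> real^'n \<Rightarrow> real measure \<Rightarrow> real^'n \<Rightarrow> 'n list \<Rightarrow> nat \<Rightarrow> real^'n" where
  "EZ_X P e \<sigma> \<gamma> x0 is k = (\<integral>zs. Xchain P e \<sigma> x0 is zs k \<partial>(PiM {..<k} (\<lambda>_. \<gamma>)))"

end

theory Submission
  imports Defs
begin


abbreviation fA :: "real^'n^'n \<Rightarrow> real^'n \<Rightarrow> 'n list \<Rightarrow> real^'n \<Rightarrow> real^'n" where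
  "fA P e is x \<equiv> fold (Amap P e) is x"

lemma hatx_add: "hatx P (x + y) i = hatx P x i + hatx P y i"
  by (simp add: hatx_def algebra_simps sum.distrib)
lemma hatx_scale: "hatx P (c *\<^sub>R x) i = c * hatx P x i"
  by (simp add: hatx_def algebra_simps sum_distrib_left)

lemma Amap_add: "Amap P e i (x + y) = Amap P e i x + Amap P e i y"
  by (simp add: Amap_def hatx_add vec_eq_iff algebra_simps)
lemma Amap_scale: "Amap P e i (c *\<^sub>R x) = c *\<^sub>R Amap P e i x"
  by (simp add: Amap_def hatx_scale vec_eq_iff algebra_simps)

lemma linear_Amap: "linear (Amap P e i)"
  by (intro linearI Amap_add Amap_scale)

lemma fA_scale: "fA P e is (c *\<^sub>R x) = c *\<^sub>R fA P e is x"
  by (induction "is" arbitrary: x) (simp_all add: Amap_scale)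

lemma Amap_mono:
  assumes "\<forall>i j. 0 \<le> P $ i $ j" "\<forall>i. 0 \<le> e $ i" "\<And>j. x $ j \<le> y $ j"
  shows "Amap P e i x $ j \<le> Amap P e i y $ j"
proof -
  have "hatx P x i \<le> hatx P y i"
    unfolding hatx_def using assms by (intro sum_mono mult_left_mono) auto
  then show ?thesis using assms by (auto simp: Amap_def intro: mult_left_mono)
qed

lemma fA_mono:
  assumes "\<forall>i j. 0 \<le> P $ i $ j" "\<forall>i. 0 \<le> e $ i" "\<And>j. x $ j \<le> y $ j"
  shows "fA P e is x $ j \<le> fA P e is y $ j"
  using assms(3)
proof (induction "is" arbitrary: x y j)
  case Nil then show ?case by simp
next
  case (Cons a "is")
  show ?case using Cons.IH[of "Amap P e a x" "Amap P e a y"] Amap_mono[OF assms(1,2) Cons.prems] by simp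
qed

lemma hatx_pos:
  assumes "transition_matrix P" "\<And>j. 0 < x $ j"
  shows "0 < hatx P x i"
proof -
  have nn: "\<forall>j. 0 \<le> P $ i $ j * x $ j" using assms by (auto simp: transition_matrix_def less_imp_le)
  have "\<exists>j. P $ i $ j \<noteq> 0"
  proof (rule ccontr)
    assume "\<not> ?thesis" then have "(\<Sum>j\<in>UNIV. P $ i $ j) = 0" by simp
    with assms(1) show False by (simp add: transition_matrix_def)
  qed
  then obtain j where "P $ i $ j \<noteq> 0" by blast
  then have p: "0 < P $ i $ j" using assms(1) unfolding transition_matrix_def by (simp add: less_le)
  then have "0 < P $ i $ j * x $ j" using assms(2) by simp
  also have "\<dots> \<le> hatx P x i" unfolding hatx_def using nn by (intro member_le_sum) auto
  finally show ?thesis .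
qed

lemma Amap_pos:
  assumes "transition_matrix P" "\<forall>i. 0 < e $ i" "\<And>j. 0 < x $ j"
  shows "0 < Amap P e i x $ j"
  using hatx_pos[OF assms(1) assms(3)] assms by (auto simp: Amap_def)

lemma fA_pos:
  assumes "transition_matrix P" "\<forall>i. 0 < e $ i" "\<And>j. 0 < x $ j"
  shows "0 < fA P e is x $ j"
  using assms(3)
proof (induction "is" arbitrary: x)
  case Nil then show ?case by simp
next
  case (Cons a "is") then show ?case using Amap_pos[OF assms(1,2)] by simp
qed

definition Finv :: "real^'n^'n \<Rightarrow> real^'n \<Rightarrow> real^'n \<Rightarrow> bool" where
  "Finv P e r \<longleftrightarrow> (\<forall>j. 0 \<le> r $ j) \<and> (\<forall>i. e $ i * hatx P r i \<le> r $ i)"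

lemma Finv_Amap:
  assumes "transition_matrix P" "\<forall>i. 0 \<le> e $ i" "Finv P e r"
  shows "Finv P e (Amap P e k r)"
proof -
  have hn: "0 \<le> hatx P r k" unfolding hatx_def using assms by (auto simp: Finv_def transition_matrix_def intro!: sum_nonneg)
  have dec: "\<And>j. Amap P e k r $ j \<le> r $ j" using assms(3) by (auto simp: Amap_def Finv_def)
  have hd: "\<And>i. hatx P (Amap P e k r) i \<le> hatx P r i"
    unfolding hatx_def using assms(1) dec by (auto simp: transition_matrix_def intro!: sum_mono mult_left_mono)
  have nn: "\<forall>j. 0 \<le> Amap P e k r $ j" using assms hn by (auto simp: Amap_def Finv_def)
  have "e $ i * hatx P (Amap P e k r) i \<le> Amap P e k r $ i" for i
  proof (cases "i = k")
    case True
    have "e $ i * hatx P (Amap P e k r) i \<le> e $ i * hatx P r i" using hd assms(2) by (simp add: mult_left_mono)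
    then show ?thesis using True by (simp add: Amap_def)
  next
    case False
    have "e $ i * hatx P (Amap P e k r) i \<le> e $ i * hatx P r i" using hd assms(2) by (simp add: mult_left_mono)
    also have "\<dots> \<le> r $ i" using assms(3) by (simp add: Finv_def)
    finally show ?thesis using False by (simp add: Amap_def)
  qed
  then show ?thesis using nn by (simp add: Finv_def)
qed

lemma Finv_fA:
  assumes "transition_matrix P" "\<forall>i. 0 \<le> e $ i" "Finv P e r"
  shows "Finv P e (fA P e is r)"
  using assms(3) by (induction "is" arbitrary: r) (auto intro: Finv_Amap[OF assms(1,2)])

lemma Finv_one:
  assumes "transition_matrix P" "\<forall>i. e $ i \<le> 1"
  shows "Finv P e (\<chi> _. 1)"
  using assms by (simp add: Finv_def hatx_def transition_matrix_def)

lemma Finv_edge: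
  assumes "transition_matrix P" "Finv P e r" "\<forall>i. 0 \<le> e $ i"
  shows "e $ i * P $ i $ j * r $ j \<le> r $ i"
proof -
  have "P $ i $ j * r $ j \<le> hatx P r i"
    unfolding hatx_def using assms by (intro member_le_sum) (auto simp: Finv_def transition_matrix_def)
  then have "e $ i * (P $ i $ j * r $ j) \<le> e $ i * hatx P r i" using assms by (simp add: mult_left_mono)
  also have "\<dots> \<le> r $ i" using assms by (simp add: Finv_def)
  finally show ?thesis by (simp add: mult.assoc)
qed

lemma Finv_trancl:
  assumes "transition_matrix P" "\<forall>i. 0 < e $ i"
    and "(i, j) \<in> {(a, b). P $ a $ b > 0}\<^sup>+"
  shows "\<exists>c>0. \<forall>r. Finv P e r \<longrightarrow> c * r $ j \<le> r $ i"
  using assms(3)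
proof (induction rule: trancl_induct)
  case (base y)
  then show ?case using Finv_edge[OF assms(1)] assms(2)
    by (intro exI[of _ "e $ i * P $ i $ y"]) (auto simp: less_imp_le)
next
  case (step y z)
  then obtain c where c: "c > 0" "\<forall>r. Finv P e r \<longrightarrow> c * r $ y \<le> r $ i" by blast
  show ?case
  proof (intro exI[of _ "c * (e $ y * P $ y $ z)"] conjI allI impI)
    show "0 < c * (e $ y * P $ y $ z)" using c step assms(2) by auto
    fix r assume r: "Finv P e r"
    have "e $ y * P $ y $ z * r $ z \<le> r $ y"
      by (rule Finv_edge[OF assms(1) r]) (use assms(2) in \<open>auto simp: less_imp_le\<close>)
    then have "c * (e $ y * P $ y $ z * r $ z) \<le> c * r $ y"
      using c by (simp add: mult_left_mono)
    also have "\<dots> \<le> r $ i" using c r by blast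
    finally show "c * (e $ y * P $ y $ z) * r $ z \<le> r $ i" by (simp add: mult.assoc)
  qed
qed

lemma Finv_ratio:
  assumes "transition_matrix P" "irreducible_no_loops P" "\<forall>i. 0 < e $ i"
  shows "\<exists>c>0. \<forall>r i j. Finv P e r \<longrightarrow> c * r $ j \<le> r $ i"
proof -
  have "\<forall>ij. \<exists>c>0. \<forall>r. Finv P e r \<longrightarrow> c * r $ snd ij \<le> r $ fst ij"
    using Finv_trancl[OF assms(1,3)] assms(2) by (auto simp: irreducible_no_loops_def)
  then obtain C where C: "\<And>ij. C ij > 0" "\<And>ij r. Finv P e r \<Longrightarrow> C ij * r $ snd ij \<le> r $ fst ij"
    by metis
  define c where "c = Min (range C)"
  have fin: "finite (range C)" by simp
  have "c \<in> range C" unfolding c_def by (rule Min_in) auto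
  then have "c > 0" using C by auto
  moreover have "c * r $ j \<le> r $ i" if "Finv P e r" for r i j
  proof -
    have "c \<le> C (i, j)" unfolding c_def by (rule Min_le) auto
    moreover have "0 \<le> r $ j" using that by (simp add: Finv_def)
    ultimately have "c * r $ j \<le> C (i,j) * r $ j" by (simp add: mult_right_mono)
    also have "\<dots> \<le> r $ i" using C(2)[OF that, of "(i,j)"] by simp
    finally show ?thesis .
  qed
  ultimately show ?thesis by blast
qed



locale chainloc =
  fixes P :: "real^'n^'n" and e :: "real^'n" and \<delta> :: real and Y0 :: "real^'n"
  assumes tm: "transition_matrix P" and irr: "irreducible_no_loops P"
    and epos: "\<forall>i. 0 < e $ i \<and> e $ i < 1"
    and dpos: "\<delta> > 0" and Y0n: "norm Y0 = 1" and Y0d: "\<forall>i. Y0 $ i > \<delta>"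
    and d2: "CARD('n) \<ge> 2"
begin

lemma Pnn: "\<forall>i j. 0 \<le> P $ i $ j" using tm by (simp add: transition_matrix_def)
lemma e_nn: "\<forall>i. 0 \<le> e $ i" using epos by (auto simp: less_imp_le)
lemma e_pos: "\<forall>i. 0 < e $ i" using epos by auto
lemma e_le1: "\<forall>i. e $ i \<le> 1" using epos by (auto simp: less_imp_le)

definition rho0 where "rho0 = (SOME c. c > 0 \<and> (\<forall>r i j. Finv P e r \<longrightarrow> c * r $ j \<le> r $ i))"

lemma rho0: "rho0 > 0" "\<And>r i j. Finv P e r \<Longrightarrow> rho0 * r $ j \<le> r $ i"
proof -
  have "\<exists>c>0. \<forall>r i j. Finv P e r \<longrightarrow> c * r $ j \<le> r $ i" by (rule Finv_ratio[OF tm irr e_pos])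
  then have "rho0 > 0 \<and> (\<forall>r i j. Finv P e r \<longrightarrow> rho0 * r $ j \<le> r $ i)"
    unfolding rho0_def by (rule someI_ex[where P="\<lambda>c. c > 0 \<and> (\<forall>r i j. Finv P e r \<longrightarrow> c * r $ j \<le> r $ i)", OF _]) 
  then show "rho0 > 0" "\<And>r i j. Finv P e r \<Longrightarrow> rho0 * r $ j \<le> r $ i" by auto
qed

lemma Y0_le1: "Y0 $ i \<le> 1"
  using component_le_norm_cart[of Y0 i] Y0n by simp

lemma Y0_pos: "0 < Y0 $ i" using Y0d dpos by (meson less_trans)

lemma fA_Y0_pos: "0 < fA P e is Y0 $ j"
  by (rule fA_pos[OF tm e_pos Y0_pos])

lemma fA_Y0_ratio: "\<delta> * rho0 * fA P e is Y0 $ j \<le> fA P e is Y0 $ i"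
proof -
  let ?r = "fA P e is (\<chi> _. 1)"
  have F: "Finv P e ?r" by (rule Finv_fA[OF tm e_nn Finv_one[OF tm e_le1]])
  have up: "fA P e is Y0 $ j \<le> ?r $ j"
    by (rule fA_mono[OF Pnn e_nn]) (simp add: Y0_le1)
  have lo: "(\<delta> *\<^sub>R ?r) $ i \<le> fA P e is Y0 $ i"
    unfolding fA_scale[symmetric] by (rule fA_mono[OF Pnn e_nn]) (use Y0d in \<open>auto simp: less_imp_le\<close>)
  have "\<delta> * rho0 * fA P e is Y0 $ j \<le> \<delta> * (rho0 * ?r $ j)"
    using up rho0(1) dpos by (simp add: mult.assoc mult_left_mono)
  also have "\<dots> \<le> \<delta> * ?r $ i" using rho0(2)[OF F, of j i] dpos by (simp add: mult_left_mono)
  also have "\<dots> \<le> fA P e is Y0 $ i" using lo by simp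
  finally show ?thesis .
qed

lemma norm_fA_pos: "0 < norm (fA P e is Y0)"
proof -
  obtain j :: 'n where True by simp
  have "0 < \<bar>fA P e is Y0 $ j\<bar>" using fA_Y0_pos[of "is" j] by simp
  also have "\<dots> \<le> norm (fA P e is Y0)" by (rule component_le_norm_cart)
  finally show ?thesis .
qed

lemma norm_pos_vec: "(\<And>j. 0 < x $ j) \<Longrightarrow> 0 < norm (x::real^'n)"
proof -
  assume a: "\<And>j. 0 < x $ j"
  obtain j :: 'n where True by simp
  have "0 < \<bar>x $ j\<bar>" using a[of j] by simp
  also have "\<dots> \<le> norm x" by (rule component_le_norm_cart)
  finally show ?thesis .
qed

lemma Ychain_gen:
  assumes "\<And>j. 0 < y $ j" "norm y = 1"
  shows "Ychain P e is y = (1 / norm (fA P e is y)) *\<^sub>R fA P e is y"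
  using assms
proof (induction "is" arbitrary: y)
  case Nil
  then show ?case by (simp add: Ychain_def)
next
  case (Cons a "is")
  let ?v = "Amap P e a y"
  have vpos: "\<And>j. 0 < ?v $ j" by (rule Amap_pos[OF tm e_pos Cons.prems(1)])
  have nv: "0 < norm ?v" by (rule norm_pos_vec[OF vpos])
  let ?y' = "(1 / norm ?v) *\<^sub>R ?v"
  have y'pos: "\<And>j. 0 < ?y' $ j" using vpos nv by simp
  have y'n: "norm ?y' = 1" using nv by simp
  have "Ychain P e (a # is) y = Ychain P e is ?y'" by (simp add: Ychain_def)
  also have "\<dots> = (1 / norm (fA P e is ?y')) *\<^sub>R fA P e is ?y'" by (rule Cons.IH[OF y'pos y'n])
  also have "fA P e is ?y' = (1 / norm ?v) *\<^sub>R fA P e (a # is) y" by (simp add: fA_scale)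
  also have "norm ((1 / norm ?v) *\<^sub>R fA P e (a # is) y) = (1 / norm ?v) * norm (fA P e (a # is) y)"
    using nv by simp
  finally show ?case using nv by simp
qed

lemma Ychain_Y0: "Ychain P e is Y0 = (1 / norm (fA P e is Y0)) *\<^sub>R fA P e is Y0"
  by (rule Ychain_gen[OF Y0_pos Y0n])

definition rho where "rho = \<delta> * rho0 / real CARD('n)"

lemma rho_pos: "rho > 0" using dpos rho0(1) by (simp add: rho_def)

lemma Ychain_props:
  fixes "is" :: "'n list"
  defines "z \<equiv> Ychain P e is Y0"
  shows "norm z = 1" "\<And>i. 0 < z $ i" "\<And>i. z $ i \<le> 1" "\<And>i. rho \<le> z $ i"
proof -
  let ?x = "fA P e is Y0"
  have nx: "0 < norm ?x" by (rule norm_fA_pos)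
  have zx: "z = (1 / norm ?x) *\<^sub>R ?x" unfolding z_def by (rule Ychain_Y0)
  show n1: "norm z = 1" using nx zx by simp
  show zp: "\<And>i. 0 < z $ i" using nx zx fA_Y0_pos by simp
  show "\<And>i. z $ i \<le> 1" using component_le_norm_cart[of z] n1 by (metis abs_le_D1)
  have ratio: "\<delta> * rho0 * z $ j \<le> z $ i" for i j
  proof -
    have "\<delta> * rho0 * ?x $ j \<le> ?x $ i" by (rule fA_Y0_ratio)
    then have "(1 / norm ?x) * (\<delta> * rho0 * ?x $ j) \<le> (1 / norm ?x) * ?x $ i"
      using nx by (intro mult_left_mono) auto
    then show ?thesis using zx by (simp add: algebra_simps)
  qed
  obtain j where j: "1 / real CARD('n) \<le> z $ j"
  proof (rule ccontr)
    assume "\<not> thesis"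
    then have lt: "\<And>j. z $ j < 1 / real CARD('n)" using that by (meson not_le)
    have "1 = norm z" using n1 by simp
    also have "\<dots> \<le> (\<Sum>j\<in>UNIV. \<bar>z $ j\<bar>)" by (rule norm_le_l1_cart)
    also have "\<dots> < (\<Sum>j\<in>(UNIV::'n set). 1 / real CARD('n))"
      using lt zp by (intro sum_strict_mono) (auto simp: less_imp_le)
    also have "\<dots> = 1" by simp
    finally show False by simp
  qed
  fix i
  have "rho = \<delta> * rho0 * (1 / real CARD('n))" by (simp add: rho_def)
  also have "\<dots> \<le> \<delta> * rho0 * z $ j" using j dpos rho0(1) by (intro mult_left_mono) auto
  also have "\<dots> \<le> z $ i" by (rule ratio)
  finally show "rho \<le> z $ i" .
qed

end


context chainloc begin

definition Fl :: "'n list \<Rightarrow> real" where "Fl is = ln (norm (fA P e is Y0))"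
definition Phi :: "'n list \<Rightarrow> real^'n \<Rightarrow> real" where "Phi js w = ln (norm (fA P e js w))"

abbreviation Z where "Z is \<equiv> Ychain P e is Y0"

lemma Fl_append: "Fl (is @ js) = Fl is + Phi js (Z is)"
proof -
  let ?x = "fA P e is Y0"
  have nx: "0 < norm ?x" by (rule norm_fA_pos)
  have xz: "?x = norm ?x *\<^sub>R Z is" using Ychain_Y0[of "is"] nx by simp
  have zpos: "\<And>j. 0 < Z is $ j" by (rule Ychain_props(2))
  have nz: "0 < norm (fA P e js (Z is))" by (rule norm_pos_vec[OF fA_pos[OF tm e_pos zpos]])
  have "fA P e (is @ js) Y0 = fA P e js ?x" by simp
  also have "\<dots> = norm ?x *\<^sub>R fA P e js (Z is)" by (subst xz) (simp only: fA_scale)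
  finally have "norm (fA P e (is @ js) Y0) = norm ?x * norm (fA P e js (Z is))" by simp
  then show ?thesis unfolding Fl_def Phi_def using nx nz by (simp add: ln_mult)
qed

lemma Fl_Nil: "Fl [] = 0" by (simp add: Fl_def Y0n)

lemma nonneg_norm_mono:
  fixes x y :: "real^'n"
  assumes "\<And>j. 0 \<le> x $ j" "\<And>j. x $ j \<le> y $ j"
  shows "norm x \<le> norm y"
proof (rule norm_le_componentwise_cart)
  fix j show "norm (x $ j) \<le> norm (y $ j)" using assms[of j] by simp
qed

lemma Phi_bounds:
  shows "ln rho + Fl js \<le> Phi js (Z is)" "Phi js (Z is) \<le> Fl js - ln \<delta>"
proof -
  let ?z = "Z is" and ?y = "fA P e js Y0"
  have ny: "0 < norm ?y" by (rule norm_fA_pos)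
  have zpos: "\<And>j. 0 < ?z $ j" by (rule Ychain_props(2))
  have nz: "0 < norm (fA P e js ?z)" by (rule norm_pos_vec[OF fA_pos[OF tm e_pos zpos]])
  have lo1: "(rho *\<^sub>R Y0) $ j \<le> ?z $ j" for j
  proof -
    have "rho * Y0 $ j \<le> rho * 1" using Y0_le1 rho_pos by (intro mult_left_mono) (auto simp: less_imp_le)
    also have "\<dots> \<le> ?z $ j" using Ychain_props(4) by simp
    finally show ?thesis by simp
  qed
  have "norm (rho *\<^sub>R ?y) \<le> norm (fA P e js ?z)"
  proof (rule nonneg_norm_mono)
    fix j
    show "0 \<le> (rho *\<^sub>R ?y) $ j" using rho_pos fA_Y0_pos[of js j] by simp
    show "(rho *\<^sub>R ?y) $ j \<le> fA P e js ?z $ j"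
      unfolding fA_scale[symmetric] by (rule fA_mono[OF Pnn e_nn lo1])
  qed
  then have "rho * norm ?y \<le> norm (fA P e js ?z)" using rho_pos by simp
  then have "ln (rho * norm ?y) \<le> ln (norm (fA P e js ?z))" using rho_pos ny
    by (metis ln_le_cancel_iff mult_pos_pos order_less_le_trans)
  then show "ln rho + Fl js \<le> Phi js ?z" unfolding Fl_def Phi_def using rho_pos ny by (simp add: ln_mult)
  have up1: "?z $ j \<le> ((1 / \<delta>) *\<^sub>R Y0) $ j" for j
  proof -
    have "?z $ j \<le> 1" by (rule Ychain_props(3))
    also have "1 \<le> Y0 $ j / \<delta>" using Y0d dpos by (simp add: less_imp_le)
    finally show ?thesis by simp
  qed
  have "norm (fA P e js ?z) \<le> norm ((1 / \<delta>) *\<^sub>R ?y)"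
  proof (rule nonneg_norm_mono)
    fix j
    show "0 \<le> fA P e js ?z $ j" using fA_pos[OF tm e_pos zpos] by (simp add: less_imp_le)
    show "fA P e js ?z $ j \<le> ((1 / \<delta>) *\<^sub>R ?y) $ j"
      unfolding fA_scale[symmetric] by (rule fA_mono[OF Pnn e_nn up1])
  qed
  then have "norm (fA P e js ?z) \<le> (1 / \<delta>) * norm ?y" using dpos by simp
  then have "ln (norm (fA P e js ?z)) \<le> ln ((1 / \<delta>) * norm ?y)" using nz
    by (metis ln_le_cancel_iff order_less_le_trans)
  then show "Phi js ?z \<le> Fl js - ln \<delta>" unfolding Fl_def Phi_def using dpos ny by (simp add: ln_mult ln_div)
qed

lemma Amap_norm_bounds:
  shows "rho \<le> norm (Amap P e i (Z is))" "norm (Amap P e i (Z is)) \<le> real CARD('n)"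
proof -
  let ?z = "Z is"
  have "UNIV - {i} \<noteq> {}"
  proof
    assume "UNIV - {i} = {}"
    then have "UNIV = {i}" by auto
    then have "card (UNIV::'n set) = card {i}" by (rule arg_cong)
    then have "CARD('n) = 1" by simp
    with d2 show False by simp
  qed
  then obtain j where j: "j \<noteq> i" by blast
  have "rho \<le> ?z $ j" by (rule Ychain_props(4))
  also have "\<dots> = \<bar>Amap P e i ?z $ j\<bar>" using j Ychain_props(2)[of "is" j] by (simp add: Amap_def)
  also have "\<dots> \<le> norm (Amap P e i ?z)" by (rule component_le_norm_cart)
  finally show "rho \<le> norm (Amap P e i ?z)" .
  have c1: "\<bar>Amap P e i ?z $ k\<bar> \<le> 1" for k
  proof (cases "k = i")
    case True
    have h0: "0 \<le> hatx P ?z i" unfolding hatx_def using Pnn Ychain_props(2)[of "is"]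
      by (intro sum_nonneg) (simp add: less_imp_le)
    have "hatx P ?z i \<le> (\<Sum>j\<in>UNIV. P $ i $ j * 1)" unfolding hatx_def using Pnn Ychain_props(3)[of "is"]
      by (intro sum_mono mult_left_mono) auto
    also have "\<dots> = 1" using tm by (simp add: transition_matrix_def)
    finally have h1: "hatx P ?z i \<le> 1" .
    have "e $ i * hatx P ?z i \<le> 1 * 1" using h0 h1 e_le1 e_nn by (intro mult_mono) auto
    then show ?thesis using True h0 e_nn by (simp add: Amap_def)
  next
    case False
    then show ?thesis using Ychain_props(2,3)[of "is" k] by (simp add: Amap_def)
  qed
  have "norm (Amap P e i ?z) \<le> (\<Sum>k\<in>UNIV. \<bar>Amap P e i ?z $ k\<bar>)" by (rule norm_le_l1_cart)
  also have "\<dots> \<le> (\<Sum>k\<in>(UNIV::'n set). 1)" using c1 by (intro sum_mono) auto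
  finally show "norm (Amap P e i ?z) \<le> real CARD('n)" by simp
qed

lemma Phi_single: "Phi [i] w = ln (norm (Amap P e i w))" by (simp add: Phi_def)

lemma Fl_snoc: "Fl (is @ [i]) = Fl is + ln (norm (Amap P e i (Z is)))"
  using Fl_append[of "is" "[i]"] by (simp add: Phi_def)

definition Bd where "Bd = ln (real CARD('n)) - ln \<delta> - 2 * ln rho"

lemma Fl_mid_bounds:
  "2 * ln rho \<le> Fl (a @ c # b) - Fl a - Fl b" "Fl (a @ c # b) - Fl a - Fl b \<le> ln (real CARD('n)) - ln \<delta>"
proof -
  have eq: "Fl (a @ c # b) = Fl a + ln (norm (Amap P e c (Z a))) + Phi b (Z (a @ [c]))"
    using Fl_append[of "a @ [c]" b] Fl_snoc[of a c] by simp
  have n0: "0 < rho" by (rule rho_pos)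
  have l1: "ln rho \<le> ln (norm (Amap P e c (Z a)))" using Amap_norm_bounds(1)[of c a] n0
    by (metis ln_le_cancel_iff order_less_le_trans)
  have l2: "ln (norm (Amap P e c (Z a))) \<le> ln (real CARD('n))"
    using Amap_norm_bounds[of c a] n0 by (metis ln_le_cancel_iff order_less_le_trans)
  show "2 * ln rho \<le> Fl (a @ c # b) - Fl a - Fl b" using eq l1 Phi_bounds(1)[of b "a @ [c]"] by simp
  show "Fl (a @ c # b) - Fl a - Fl b \<le> ln (real CARD('n)) - ln \<delta>" using eq l2 Phi_bounds(2)[of b "a @ [c]"] by simp
qed

lemma Fl_bd: "\<bar>Fl (a @ c # b) - Fl (a @ c' # b)\<bar> \<le> Bd"
  using Fl_mid_bounds[of a c b] Fl_mid_bounds[of a c' b] unfolding Bd_def by linarith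

lemma Fl_add_bounds: "ln rho \<le> Fl (is @ js) - Fl is - Fl js" "Fl (is @ js) - Fl is - Fl js \<le> - ln \<delta>"
  using Fl_append[of "is" js] Phi_bounds[of js "is"] by simp_all

end


definition Lk :: "nat \<Rightarrow> ('a::finite) list set" where "Lk k = {xs. length xs = k}"

lemma Lk_finite: "finite (Lk k :: ('a::finite) list set)"
  using finite_lists_length_eq[of "UNIV::'a set" k] by (simp add: Lk_def)

lemma Lk_card: "card (Lk k :: ('a::finite) list set) = CARD('a) ^ k"
  using card_lists_length_eq[of "UNIV::'a set" k] by (simp add: Lk_def)

lemma Lk_card_pos: "0 < card (Lk k :: ('a::finite) list set)"
  by (simp add: Lk_card)

lemma Lk_ne: "Lk k \<noteq> ({} :: ('a::finite) list set)"
  using Lk_card_pos[of k] by (metis card.empty less_irrefl)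

lemma Lk_0: "Lk 0 = {[]}" by (auto simp: Lk_def)

lemma sum_Lk_Suc:
  "(\<Sum>xs\<in>Lk (Suc k). f xs) = (\<Sum>i\<in>(UNIV::('a::finite) set). \<Sum>xs\<in>Lk k. f (i # xs))"
proof -
  have eq: "Lk (Suc k) = (\<lambda>(i, xs). i # xs) ` (UNIV \<times> (Lk k :: 'a list set))"
    by (auto simp: Lk_def length_Suc_conv image_iff)
  have inj: "inj_on (\<lambda>(i, xs). i # xs) (UNIV \<times> (Lk k :: 'a list set))"
    by (auto simp: inj_on_def)
  have "(\<Sum>xs\<in>Lk (Suc k). f xs) = (\<Sum>p\<in>UNIV \<times> (Lk k :: 'a list set). f ((\<lambda>(i, xs). i # xs) p))"
    unfolding eq using sum.reindex[OF inj, of f] by (simp add: o_def)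
  also have "\<dots> = (\<Sum>i\<in>UNIV. \<Sum>xs\<in>Lk k. f (i # xs))"
    by (simp add: sum.cartesian_product prod.case_distrib)
  finally show ?thesis .
qed

lemma sum_Lk_append:
  "(\<Sum>xs\<in>Lk (k + m). f xs) = (\<Sum>is\<in>(Lk k :: ('a::finite) list set). \<Sum>js\<in>Lk m. f (is @ js))"
proof (induction k arbitrary: f)
  case 0 then show ?case by (simp add: Lk_0)
next
  case (Suc k)
  have "(\<Sum>xs\<in>Lk (Suc k + m). f xs) = (\<Sum>i\<in>(UNIV::'a set). \<Sum>xs\<in>Lk (k + m). f (i # xs))"
    using sum_Lk_Suc[where k="k + m" and f=f] by simp
  also have "\<dots> = (\<Sum>i\<in>(UNIV::'a set). \<Sum>is\<in>Lk k. \<Sum>js\<in>Lk m. f (i # is @ js))"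
    using Suc.IH by simp
  also have "\<dots> = (\<Sum>is\<in>Lk (Suc k). \<Sum>js\<in>Lk m. f (is @ js))"
    using sum_Lk_Suc[where k=k and f="\<lambda>is. \<Sum>js\<in>Lk m. f (is @ js)"] by simp
  finally show ?case .
qed

lemma sum_Lk_1: "(\<Sum>xs\<in>Lk (Suc 0). f xs) = (\<Sum>i\<in>(UNIV::('a::finite) set). f [i])"
  using sum_Lk_Suc[where k=0 and f=f] by (simp add: Lk_0)

lemma sum_Lk_snoc:
  "(\<Sum>xs\<in>Lk (Suc k). f xs) = (\<Sum>is\<in>(Lk k :: ('a::finite) list set). \<Sum>i\<in>UNIV. f (is @ [i]))"
  using sum_Lk_append[where k=k and m=1 and f=f] by (simp add: sum_Lk_1)

definition avg :: "nat \<Rightarrow> (('a::finite) list \<Rightarrow> real) \<Rightarrow> real" where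
  "avg k f = (\<Sum>xs\<in>Lk k. f xs) / card (Lk k :: 'a list set)"

lemma Hoeffding_finite:
  fixes v :: "'a::finite \<Rightarrow> real"
  assumes l: "l > 0" and ab: "\<And>i. a \<le> v i" "\<And>i. v i \<le> b" and s0: "(\<Sum>i\<in>UNIV. v i) = 0"
  shows "(\<Sum>i\<in>UNIV. exp (l * v i)) \<le> real CARD('a) * exp (l\<^sup>2 * (b - a)\<^sup>2 / 8)"
proof -
  let ?M = "measure_pmf (pmf_of_set (UNIV::'a set))"
  interpret interval_bounded_random_variable ?M v a b
    by unfold_locales (auto simp: ab)
  have E0: "measure_pmf.expectation (pmf_of_set (UNIV::'a set)) v = 0" using integral_pmf_of_set[of "UNIV::'a set" v] s0 by simp
  have "nn_integral ?M (\<lambda>x. exp (l * v x)) \<le> ennreal (exp (l\<^sup>2 * (b - a)\<^sup>2 / 8))"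
    by (rule Hoeffdings_lemma_nn_integral_0[OF l E0])
  moreover have "nn_integral ?M (\<lambda>x. exp (l * v x)) = ennreal ((\<Sum>i\<in>UNIV. exp (l * v i)) / real CARD('a))"
  proof -
    have "nn_integral ?M (\<lambda>x. exp (l * v x)) = (\<Sum>i\<in>UNIV. ennreal (exp (l * v i))) / of_nat CARD('a)"
      by (rule nn_integral_pmf_of_set) auto
    also have "(\<Sum>i\<in>UNIV. ennreal (exp (l * v i))) = ennreal (\<Sum>i\<in>UNIV. exp (l * v i))"
      by (rule sum_ennreal) auto
    also have "(of_nat CARD('a) :: ennreal) = ennreal (real CARD('a))"
      by (rule ennreal_of_nat_eq_real_of_nat)
    also have "ennreal (\<Sum>i\<in>UNIV. exp (l * v i)) / ennreal (real CARD('a)) = ennreal ((\<Sum>i\<in>UNIV. exp (l * v i)) / real CARD('a))"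
      by (rule divide_ennreal) (auto intro: sum_nonneg)
    finally show ?thesis .
  qed
  ultimately have "(\<Sum>i\<in>UNIV. exp (l * v i)) / real CARD('a) \<le> exp (l\<^sup>2 * (b - a)\<^sup>2 / 8)"
    by (simp add: ennreal_le_iff2)
  then show ?thesis by (simp add: field_simps)
qed



definition bdiff :: "(('a::finite) list \<Rightarrow> real) \<Rightarrow> real \<Rightarrow> bool" where
  "bdiff f B \<longleftrightarrow> (\<forall>a b c c'. \<bar>f (a @ c # b) - f (a @ c' # b)\<bar> \<le> B)"

lemma avg_Suc:
  "avg (Suc k) f = (\<Sum>i\<in>(UNIV::('a::finite) set). avg k (\<lambda>xs. f (i # xs))) / real CARD('a)"
proof -
  have "avg (Suc k) f = (\<Sum>i\<in>(UNIV::'a set). \<Sum>xs\<in>Lk k. f (i # xs)) / (real CARD('a) * real (card (Lk k :: 'a list set)))"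
    unfolding avg_def by (simp add: sum_Lk_Suc[where f=f and k=k] Lk_card)
  also have "\<dots> = (\<Sum>i\<in>(UNIV::'a set). avg k (\<lambda>xs. f (i # xs))) / real CARD('a)"
    unfolding avg_def by (simp add: sum_divide_distrib[symmetric] field_simps)
  finally show ?thesis .
qed

lemma avg_uminus: "avg k (\<lambda>xs. - f xs) = - avg k f"
  by (simp add: avg_def sum_negf)

lemma mcdiarmid_mgf:
  fixes f :: "('a::finite) list \<Rightarrow> real"
  assumes l: "l > 0" and bd: "bdiff f B"
  shows "(\<Sum>xs\<in>Lk k. exp (l * (f xs - avg k f))) \<le> real (card (Lk k :: 'a list set)) * exp (l\<^sup>2 * real k * B\<^sup>2 / 8)"
  using bd
proof (induction k arbitrary: f)
  case 0
  then show ?case by (simp add: Lk_0 avg_def)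
next
  case (Suc k)
  define N where "N = real (card (Lk k :: 'a list set))"
  define G where "G i = avg k (\<lambda>xs. f (i # xs))" for i
  define A where "A = avg (Suc k) f"
  have A: "A = (\<Sum>i\<in>UNIV. G i) / real CARD('a)" unfolding A_def G_def by (rule avg_Suc)
  have bdi: "bdiff (\<lambda>xs. f (i # xs)) B" for i
    using Suc.prems unfolding bdiff_def by (metis append_Cons)
  have IH: "(\<Sum>xs\<in>Lk k. exp (l * (f (i # xs) - G i))) \<le> N * exp (l\<^sup>2 * real k * B\<^sup>2 / 8)" for i
    using Suc.IH[OF bdi[of i]] unfolding G_def N_def .
  have Npos: "N > 0" unfolding N_def using Lk_card_pos by simp
  have Gdiff: "G i - G i' \<le> B" for i i'
  proof -
    have "G i - G i' = (\<Sum>xs\<in>Lk k. f (i # xs) - f (i' # xs)) / N"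
      unfolding G_def avg_def N_def by (simp add: sum_subtractf diff_divide_distrib)
    also have "\<dots> \<le> (\<Sum>xs\<in>(Lk k :: 'a list set). B) / N"
      using Suc.prems unfolding bdiff_def
      by (intro divide_right_mono sum_mono) (use Npos in \<open>auto dest: spec[of _ "[]"] simp: abs_le_iff\<close>)
    also have "\<dots> = B" using Npos unfolding N_def by simp
    finally show ?thesis .
  qed
  define m where "m = Min (range G)"
  have m1: "m \<le> G i" for i unfolding m_def by (rule Min_le) auto
  have "m \<in> range G" unfolding m_def by (rule Min_in) auto
  then obtain i0 where i0: "m = G i0" by auto
  have m2: "G i \<le> m + B" for i using Gdiff[of i i0] i0 by simp
  have s0: "(\<Sum>i\<in>UNIV. G i - A) = 0" using A by (simp add: sum_subtractf)
  have H: "(\<Sum>i\<in>UNIV. exp (l * (G i - A))) \<le> real CARD('a) * exp (l\<^sup>2 * ((m + B - A) - (m - A))\<^sup>2 / 8)"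
    by (rule Hoeffding_finite[OF l _ _ s0]) (use m1 m2 in auto)
  have "(\<Sum>xs\<in>Lk (Suc k). exp (l * (f xs - A))) = (\<Sum>i\<in>UNIV. \<Sum>xs\<in>Lk k. exp (l * (f (i # xs) - A)))"
    by (rule sum_Lk_Suc)
  also have "\<dots> = (\<Sum>i\<in>UNIV. exp (l * (G i - A)) * (\<Sum>xs\<in>Lk k. exp (l * (f (i # xs) - G i))))"
    by (simp add: sum_distrib_left exp_add[symmetric] algebra_simps)
  also have "\<dots> \<le> (\<Sum>i\<in>UNIV. exp (l * (G i - A)) * (N * exp (l\<^sup>2 * real k * B\<^sup>2 / 8)))"
    by (intro sum_mono mult_left_mono IH) auto
  also have "\<dots> = (\<Sum>i\<in>UNIV. exp (l * (G i - A))) * (N * exp (l\<^sup>2 * real k * B\<^sup>2 / 8))"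
    by (simp add: sum_distrib_right)
  also have "\<dots> \<le> (real CARD('a) * exp (l\<^sup>2 * B\<^sup>2 / 8)) * (N * exp (l\<^sup>2 * real k * B\<^sup>2 / 8))"
    using H Npos by (intro mult_right_mono) auto
  also have "\<dots> = real (card (Lk (Suc k) :: 'a list set)) * exp (l\<^sup>2 * real (Suc k) * B\<^sup>2 / 8)"
    unfolding N_def by (simp add: Lk_card exp_add[symmetric] algebra_simps add_divide_distrib)
  finally show ?case unfolding A_def .
qed

lemma mcdiarmid_upper:
  fixes f :: "('a::finite) list \<Rightarrow> real"
  assumes bd: "bdiff f B" and B: "B > 0" and k: "k > 0" and s: "s > 0"
  shows "real (card {xs\<in>Lk k. f xs - avg k f \<ge> s}) \<le> real (card (Lk k :: 'a list set)) * exp (- 2 * s\<^sup>2 / (real k * B\<^sup>2))"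
proof -
  define l where "l = 4 * s / (real k * B\<^sup>2)"
  have l: "l > 0" unfolding l_def using B k s by simp
  let ?S = "{xs\<in>Lk k. f xs - avg k f \<ge> s}"
  have fin: "finite (Lk k :: 'a list set)" by (rule Lk_finite)
  have "real (card ?S) * exp (l * s) = (\<Sum>xs\<in>?S. exp (l * s))" by simp
  also have "\<dots> \<le> (\<Sum>xs\<in>?S. exp (l * (f xs - avg k f)))"
    using l by (intro sum_mono) auto
  also have "\<dots> \<le> (\<Sum>xs\<in>Lk k. exp (l * (f xs - avg k f)))"
    by (rule sum_mono2[OF fin]) auto
  also have "\<dots> \<le> real (card (Lk k :: 'a list set)) * exp (l\<^sup>2 * real k * B\<^sup>2 / 8)"
    by (rule mcdiarmid_mgf[OF l bd])
  finally have "real (card ?S) \<le> real (card (Lk k :: 'a list set)) * (exp (l\<^sup>2 * real k * B\<^sup>2 / 8) / exp (l * s))"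
    by (simp add: field_simps)
  also have "exp (l\<^sup>2 * real k * B\<^sup>2 / 8) / exp (l * s) = exp (- 2 * s\<^sup>2 / (real k * B\<^sup>2))"
    unfolding exp_diff[symmetric] l_def using B k by (simp add: field_simps power2_eq_square)
  finally show ?thesis by simp
qed

lemma mcdiarmid_two:
  fixes f :: "('a::finite) list \<Rightarrow> real"
  assumes bd: "bdiff f B" and B: "B > 0" and k: "k > 0" and s: "s > 0"
  shows "real (card {xs\<in>Lk k. \<bar>f xs - avg k f\<bar> \<ge> s}) \<le> 2 * real (card (Lk k :: 'a list set)) * exp (- 2 * s\<^sup>2 / (real k * B\<^sup>2))"
proof -
  have bd': "bdiff (\<lambda>xs. - f xs) B" unfolding bdiff_def
  proof (intro allI)
    fix a b c c'
    have "\<bar>f (a @ c # b) - f (a @ c' # b)\<bar> \<le> B" using bd unfolding bdiff_def by blast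
    then show "\<bar>- f (a @ c # b) - - f (a @ c' # b)\<bar> \<le> B" by arith
  qed
  have U: "real (card {xs\<in>Lk k. f xs - avg k f \<ge> s}) \<le> real (card (Lk k :: 'a list set)) * exp (- 2 * s\<^sup>2 / (real k * B\<^sup>2))"
    by (rule mcdiarmid_upper[OF bd B k s])
  have L: "real (card {xs\<in>Lk k. - f xs - avg k (\<lambda>xs. - f xs) \<ge> s}) \<le> real (card (Lk k :: 'a list set)) * exp (- 2 * s\<^sup>2 / (real k * B\<^sup>2))"
    by (rule mcdiarmid_upper[OF bd' B k s])
  have eq: "{xs\<in>Lk k. \<bar>f xs - avg k f\<bar> \<ge> s} = {xs\<in>Lk k. f xs - avg k f \<ge> s} \<union> {xs\<in>Lk k. - f xs - avg k (\<lambda>xs. - f xs) \<ge> s}"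
  proof (intro set_eqI iffI)
    fix x assume "x \<in> {xs\<in>Lk k. \<bar>f xs - avg k f\<bar> \<ge> s}"
    then show "x \<in> {xs\<in>Lk k. f xs - avg k f \<ge> s} \<union> {xs\<in>Lk k. - f xs - avg k (\<lambda>xs. - f xs) \<ge> s}"
      unfolding avg_uminus by auto
  next
    fix x assume "x \<in> {xs\<in>Lk k. f xs - avg k f \<ge> s} \<union> {xs\<in>Lk k. - f xs - avg k (\<lambda>xs. - f xs) \<ge> s}"
    then show "x \<in> {xs\<in>Lk k. \<bar>f xs - avg k f\<bar> \<ge> s}"
      unfolding avg_uminus by auto
  qed
  have "real (card {xs\<in>Lk k. \<bar>f xs - avg k f\<bar> \<ge> s}) \<le> real (card {xs\<in>Lk k. f xs - avg k f \<ge> s}) + real (card {xs\<in>Lk k. - f xs - avg k (\<lambda>xs. - f xs) \<ge> s})"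
    unfolding eq using card_Un_le[of "{xs\<in>Lk k. f xs - avg k f \<ge> s}" "{xs\<in>Lk k. - f xs - avg k (\<lambda>xs. - f xs) \<ge> s}"]
    by linarith
  then show ?thesis using U L by linarith
qed



context chainloc begin

definition gfun :: "real^'n \<Rightarrow> real" where
  "gfun y = (\<Sum>i\<in>UNIV. ln (norm (Amap P e i y))) / real CARD('n)"

definition aseq :: "nat \<Rightarrow> real" where "aseq k = avg k Fl"
definition bseq :: "nat \<Rightarrow> real" where "bseq k = avg k (\<lambda>is. gfun (Z is))"

lemma aseq_0: "aseq 0 = 0" by (simp add: aseq_def avg_def Lk_0 Fl_Nil)

lemma aseq_Suc: "aseq (Suc k) = aseq k + bseq k"
proof -
  define N where "N = real (card (Lk k :: 'n list set))"
  have Npos: "N > 0" unfolding N_def using Lk_card_pos by simp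
  have d: "real CARD('n) > 0" by simp
  have "aseq (Suc k) = (\<Sum>is\<in>(Lk k :: 'n list set). \<Sum>i\<in>UNIV. Fl (is @ [i])) / (real CARD('n) * N)"
    unfolding aseq_def avg_def N_def by (simp add: sum_Lk_snoc[where f=Fl and k=k] Lk_card)
  also have "\<dots> = (\<Sum>is\<in>(Lk k :: 'n list set). real CARD('n) * Fl is + real CARD('n) * gfun (Z is)) / (real CARD('n) * N)"
    by (simp add: Fl_snoc sum.distrib gfun_def)
  also have "\<dots> = aseq k + bseq k"
  proof -
    have cpos: "0 < real (card (Lk k :: 'n list set))" using Npos unfolding N_def .
    show ?thesis
    unfolding aseq_def bseq_def avg_def N_def using d cpos
    by (simp add: sum.distrib sum_distrib_left[symmetric] field_simps)
  qed
  finally show ?thesis .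
qed

lemma aseq_shift: "aseq (k + m) = aseq k + (\<Sum>j<m. bseq (k + j))"
  by (induction m) (simp_all add: aseq_Suc)

definition C0 where "C0 = \<bar>ln rho\<bar> + \<bar>ln \<delta>\<bar>"

lemma aseq_add: "\<bar>aseq (k + m) - aseq k - aseq m\<bar> \<le> C0"
proof -
  define Nk where "Nk = real (card (Lk k :: 'n list set))"
  define Nm where "Nm = real (card (Lk m :: 'n list set))"
  have Nk: "Nk > 0" unfolding Nk_def using Lk_card_pos by simp
  have Nm: "Nm > 0" unfolding Nm_def using Lk_card_pos by simp
  have cardkm: "real (card (Lk (k + m) :: 'n list set)) = Nk * Nm"
    unfolding Nk_def Nm_def by (simp add: Lk_card power_add)
  define D where "D is js = Fl (is @ js) - Fl is - Fl js" for "is" js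
  have Dle: "\<bar>D is js\<bar> \<le> C0" for "is" js
    using Fl_add_bounds[of "is" js] unfolding D_def C0_def by linarith
  have "aseq (k + m) = (\<Sum>is\<in>(Lk k :: 'n list set). \<Sum>js\<in>Lk m. Fl is + Fl js + D is js) / (Nk * Nm)"
    unfolding aseq_def avg_def cardkm by (simp add: sum_Lk_append[where f=Fl and k=k and m=m] D_def)
  also have "\<dots> = aseq k + aseq m + (\<Sum>is\<in>(Lk k :: 'n list set). \<Sum>js\<in>Lk m. D is js) / (Nk * Nm)"
    unfolding aseq_def avg_def Nk_def[symmetric] Nm_def[symmetric] using Nk Nm
    by (simp add: sum.distrib sum_distrib_left[symmetric] sum_distrib_right[symmetric] field_simps Nk_def Nm_def)
  finally have eq: "aseq (k + m) - aseq k - aseq m = (\<Sum>is\<in>(Lk k :: 'n list set). \<Sum>js\<in>Lk m. D is js) / (Nk * Nm)"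
    by simp
  have "\<bar>\<Sum>is\<in>(Lk k :: 'n list set). \<Sum>js\<in>Lk m. D is js\<bar> \<le> (\<Sum>is\<in>(Lk k :: 'n list set). \<Sum>js\<in>(Lk m :: 'n list set). C0)"
    by (rule order_trans[OF sum_abs], rule sum_mono, rule order_trans[OF sum_abs], rule sum_mono, rule Dle)
  also have "\<dots> = Nk * Nm * C0" unfolding Nk_def Nm_def by simp
  finally show ?thesis unfolding eq using Nk Nm by (simp add: abs_div field_simps)
qed

lemma aseq_linear_bound:
  assumes b: "bseq \<longlonglongrightarrow> \<alpha>"
  shows "\<bar>aseq m - real m * \<alpha>\<bar> \<le> C0"
proof -
  define s where "s k = (\<Sum>j<m. bseq (k + j) - \<alpha>)" for k
  have s0: "s \<longlonglongrightarrow> (\<Sum>j<m. \<alpha> - \<alpha>)"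
    unfolding s_def
  proof (intro tendsto_sum tendsto_diff tendsto_const)
    fix j
    show "(\<lambda>k. bseq (k + j)) \<longlonglongrightarrow> \<alpha>" using LIMSEQ_ignore_initial_segment[OF b, of j] by simp
  qed
  then have s0': "(\<lambda>k. C0 + \<bar>s k\<bar>) \<longlonglongrightarrow> C0 + \<bar>0\<bar>"
    by (intro tendsto_add tendsto_rabs tendsto_const) simp
  have "\<bar>aseq m - real m * \<alpha>\<bar> \<le> C0 + \<bar>s k\<bar>" for k
  proof -
    have "aseq m - real m * \<alpha> = (aseq m - (aseq (k + m) - aseq k)) + s k"
      unfolding s_def aseq_shift[of k m] by (simp add: sum_subtractf)
    moreover have "\<bar>aseq m - (aseq (k + m) - aseq k)\<bar> \<le> C0" using aseq_add[of k m] by linarith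
    ultimately show ?thesis by linarith
  qed
  then show ?thesis using LIMSEQ_le_const[OF s0'] by simp
qed

end


lemma Amap_cont: "continuous_on UNIV (Amap P e i)"
  by (rule linear_continuous_on) (simp add: linear_conv_bounded_linear[symmetric] linear_Amap)

lemma Amap_meas[measurable]: "Amap P e i \<in> borel_measurable borel"
  by (rule borel_measurable_continuous_onI[OF Amap_cont])

context chainloc begin

definition clip :: "real \<Rightarrow> real" where "clip s = max rho (min (real CARD('n)) s)"

definition gt :: "real^'n \<Rightarrow> real" where
  "gt y = (\<Sum>i\<in>UNIV. ln (clip (norm (Amap P e i y)))) / real CARD('n)"

definition Tf :: "real^'n \<Rightarrow> real" where
  "Tf y = min 1 (\<Sum>i\<in>UNIV. \<bar>clip (norm (Amap P e i y)) - norm (Amap P e i y)\<bar>)"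

lemma clip_Z: "clip (norm (Amap P e i (Z is))) = norm (Amap P e i (Z is))"
  using Amap_norm_bounds[of i "is"] unfolding clip_def by simp

lemma gt_Z: "gt (Z is) = gfun (Z is)" unfolding gt_def gfun_def clip_Z ..

lemma Tf_Z: "Tf (Z is) = 0" unfolding Tf_def clip_Z by simp

lemma clip_bounds: "rho \<le> clip s" "clip s \<le> max rho (real CARD('n))"
  unfolding clip_def by auto

lemma cont_clip: "continuous_on UNIV clip"
  unfolding clip_def by (intro continuous_intros)

lemma gt_cont: "continuous_on UNIV gt"
proof -
  have H: "continuous_on UNIV (\<lambda>y. ln (clip (norm (Amap P e i y))))" for i
  proof (rule continuous_on_ln)
    show "continuous_on UNIV (\<lambda>y. clip (norm (Amap P e i y)))"
      by (rule continuous_on_compose2[OF cont_clip]) (auto intro!: continuous_intros Amap_cont)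
    show "\<forall>x\<in>UNIV. clip (norm (Amap P e i x)) \<noteq> 0" using clip_bounds(1) rho_pos by (metis less_le_trans less_irrefl)
  qed
  show ?thesis unfolding gt_def
    by (rule continuous_on_divide[OF continuous_on_sum continuous_on_const]) (use H in auto)
qed

lemma Tf_cont: "continuous_on UNIV Tf"
proof -
  have "continuous_on UNIV (\<lambda>y. clip (norm (Amap P e i y)))" for i
    by (rule continuous_on_compose2[OF cont_clip]) (auto intro!: continuous_intros Amap_cont)
  then show ?thesis unfolding Tf_def by (intro continuous_intros Amap_cont) auto
qed

lemma gt_bounded: "\<bar>gt y\<bar> \<le> \<bar>ln rho\<bar> + \<bar>ln (max rho (real CARD('n)))\<bar>"
proof -
  have "\<bar>ln (clip s)\<bar> \<le> \<bar>ln rho\<bar> + \<bar>ln (max rho (real CARD('n)))\<bar>" for s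
  proof -
    have "ln rho \<le> ln (clip s)" using clip_bounds(1)[of s] rho_pos by simp
    moreover have "ln (clip s) \<le> ln (max rho (real CARD('n)))"
      using clip_bounds[of s] rho_pos by (metis ln_le_cancel_iff order_less_le_trans)
    ultimately show ?thesis by linarith
  qed
  then have "\<bar>\<Sum>i\<in>(UNIV::'n set). ln (clip (norm (Amap P e i y)))\<bar> \<le> real CARD('n) * (\<bar>ln rho\<bar> + \<bar>ln (max rho (real CARD('n)))\<bar>)"
    by (intro order_trans[OF sum_abs]) (simp add: sum_bounded_above)
  then show ?thesis unfolding gt_def by (simp add: abs_div field_simps)
qed

lemma Y0_Spos: "Y0 \<in> Spos" using Y0n Y0_pos by (simp add: Spos_def)

lemma Ilaw_Lk: "Ilaw k = pmf_of_set (Lk k)" by (simp add: Ilaw_def Lk_def)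

lemma int_mu:
  assumes f: "f \<in> borel_measurable borel"
  shows "(\<integral>x. (f x :: real) \<partial>distr (measure_pmf (Ilaw k)) borel (\<lambda>is. Ychain P e is Y0)) = avg k (\<lambda>is. f (Z is))"
proof -
  have "(\<integral>x. f x \<partial>distr (measure_pmf (Ilaw k)) borel (\<lambda>is. Ychain P e is Y0)) = (\<integral>is. f (Z is) \<partial>measure_pmf (Ilaw k))"
    by (rule integral_distr) (simp_all add: f)
  also have "\<dots> = avg k (\<lambda>is. f (Z is))"
    unfolding Ilaw_Lk avg_def by (rule integral_pmf_of_set[OF Lk_ne Lk_finite])
  finally show ?thesis .
qed

lemma gfun_meas[measurable]: "gfun \<in> borel_measurable borel"
  unfolding gfun_def by measurable

lemma bseq_conv:
  assumes \<nu>: "prob_space \<nu>" "sets \<nu> = sets borel"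
    "\<forall>y\<in>Spos. weak_conv_vec (\<lambda>k. distr (measure_pmf (Ilaw k)) borel (\<lambda>is. Ychain P e is y)) \<nu>"
  shows "bseq \<longlonglongrightarrow> alpha_const P e \<nu>"
proof -
  let ?mu = "\<lambda>k. distr (measure_pmf (Ilaw k)) borel (\<lambda>is. Ychain P e is Y0)"
  have W: "\<And>f. continuous_on UNIV f \<Longrightarrow> bounded (range f) \<Longrightarrow> (\<lambda>k. \<integral>x. (f x :: real) \<partial>?mu k) \<longlonglongrightarrow> (\<integral>x. f x \<partial>\<nu>)"
    using \<nu>(3) Y0_Spos unfolding weak_conv_vec_def by blast
  have gt_meas: "gt \<in> borel_measurable borel" by (rule borel_measurable_continuous_onI[OF gt_cont])
  have Tf_meas: "Tf \<in> borel_measurable borel" by (rule borel_measurable_continuous_onI[OF Tf_cont])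
  have gtb: "bounded (range gt)" unfolding bounded_real using gt_bounded by blast
  have Tnn: "0 \<le> Tf x" for x unfolding Tf_def by (auto intro!: sum_nonneg)
  have Tle: "Tf x \<le> 1" for x unfolding Tf_def by simp
  have Tfb: "bounded (range Tf)" unfolding bounded_real
  proof (intro exI ballI)
    fix x assume "x \<in> range Tf"
    then obtain y where "x = Tf y" by auto
    then show "\<bar>x\<bar> \<le> 1" using Tnn[of y] Tle[of y] by simp
  qed
  have "(\<lambda>k. \<integral>x. gt x \<partial>?mu k) \<longlonglongrightarrow> (\<integral>x. gt x \<partial>\<nu>)" by (rule W[OF gt_cont gtb])
  moreover have "(\<lambda>k. \<integral>x. gt x \<partial>?mu k) = bseq"
    unfolding int_mu[OF gt_meas] bseq_def gt_Z ..
  ultimately have b: "bseq \<longlonglongrightarrow> (\<integral>x. gt x \<partial>\<nu>)" by simp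
  have "(\<lambda>k. \<integral>x. Tf x \<partial>?mu k) \<longlonglongrightarrow> (\<integral>x. Tf x \<partial>\<nu>)" by (rule W[OF Tf_cont Tfb])
  moreover have "(\<lambda>k. \<integral>x. Tf x \<partial>?mu k) = (\<lambda>k. 0)"
    unfolding int_mu[OF Tf_meas] Tf_Z by (simp add: avg_def)
  ultimately have "(\<lambda>k. 0::real) \<longlonglongrightarrow> (\<integral>x. Tf x \<partial>\<nu>)" by simp
  then have T0: "(\<integral>x. Tf x \<partial>\<nu>) = 0" using LIMSEQ_unique tendsto_const by blast
  have measT: "Tf \<in> borel_measurable \<nu>" using Tf_meas measurable_cong_sets[OF \<nu>(2) refl] by blast
  have measgt: "gt \<in> borel_measurable \<nu>" using gt_meas measurable_cong_sets[OF \<nu>(2) refl] by blast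
  have measg: "gfun \<in> borel_measurable \<nu>" using gfun_meas measurable_cong_sets[OF \<nu>(2) refl] by blast
  interpret nu: prob_space \<nu> by (rule \<nu>(1))
  have intT: "integrable \<nu> Tf"
    by (rule nu.integrable_const_bound[where B=1]) (use Tnn Tle measT in \<open>auto simp: abs_le_iff\<close>)
  have "AE x in \<nu>. Tf x = 0"
    using integral_nonneg_eq_0_iff_AE[OF intT] T0 Tnn by simp
  then have "AE x in \<nu>. gt x = gfun x"
  proof (rule AE_mp, intro AE_I2 impI)
    fix x assume "Tf x = 0"
    then have "(\<Sum>i\<in>UNIV. \<bar>clip (norm (Amap P e i x)) - norm (Amap P e i x)\<bar>) = 0"
      unfolding Tf_def by (simp add: min_def split: if_splits)
    then have "\<forall>i\<in>UNIV. \<bar>clip (norm (Amap P e i x)) - norm (Amap P e i x)\<bar> = 0"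
      by (subst sum_nonneg_eq_0_iff[symmetric]) auto
    then show "gt x = gfun x" unfolding gt_def gfun_def by simp
  qed
  then have "(\<integral>x. gt x \<partial>\<nu>) = (\<integral>x. gfun x \<partial>\<nu>)" by (rule integral_cong_AE[OF measgt measg])
  also have "\<dots> = alpha_const P e \<nu>" unfolding alpha_const_def gfun_def ..
  finally show ?thesis using b by simp
qed

end


lemma bmap_eq: "bmap \<sigma> i z = z *\<^sub>R (\<chi> j. if j = i then \<sigma> $ i else 0)"
  by (simp add: bmap_def vec_eq_iff)

lemma Amap_bl: "bounded_linear (Amap P e i)"
  by (simp add: linear_conv_bounded_linear[symmetric] linear_Amap)

lemma Xchain_int:
  fixes \<gamma> :: "real measure"
  assumes \<gamma>: "prob_space \<gamma>" "integrable \<gamma> (\<lambda>z. z)" "(\<integral>z. z \<partial>\<gamma>) = 0"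
    and k: "k \<le> length is"
  shows "integrable (PiM {..<length is} (\<lambda>_. \<gamma>)) (\<lambda>zs. Xchain P e \<sigma> x0 is zs k) \<and>
         (\<integral>zs. Xchain P e \<sigma> x0 is zs k \<partial>(PiM {..<length is} (\<lambda>_. \<gamma>))) = fold (Amap P e) (take k is) x0"
  using k
proof (induction k)
  let ?M = "PiM {..<length is} (\<lambda>_. \<gamma>)"
  interpret M: prob_space ?M by (rule prob_space_PiM) (use \<gamma> in auto)
  case 0
  then show ?case by (simp add: M.prob_space)
next
  let ?M = "PiM {..<length is} (\<lambda>_. \<gamma>)"
  interpret M: prob_space ?M by (rule prob_space_PiM) (use \<gamma> in auto)
  case (Suc k)
  then have IH: "integrable ?M (\<lambda>zs. Xchain P e \<sigma> x0 is zs k)"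
     "(\<integral>zs. Xchain P e \<sigma> x0 is zs k \<partial>?M) = fold (Amap P e) (take k is) x0" by auto
  have kl: "k < length is" using Suc.prems by simp
  have meas: "(\<lambda>zs. zs k) \<in> measurable ?M \<gamma>"
    using measurable_component_singleton[of k "{..<length is}" "\<lambda>_. \<gamma>"] kl by simp
  have dist: "distr ?M \<gamma> (\<lambda>zs. zs k) = \<gamma>"
    by (rule distr_PiM_component) (use \<gamma> kl in auto)
  have idm: "(\<lambda>z. z) \<in> borel_measurable \<gamma>" using \<gamma>(2) by (rule borel_measurable_integrable)
  have intz: "integrable ?M (\<lambda>zs. zs k)"
  proof -
    have "integrable (distr ?M \<gamma> (\<lambda>zs. zs k)) (\<lambda>z. z)" using dist \<gamma>(2) by simp
    then show ?thesis using integrable_distr_eq[OF meas idm] by simp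
  qed
  have intz0: "(\<integral>zs. zs k \<partial>?M) = 0"
  proof -
    have "(\<integral>zs. zs k \<partial>?M) = (\<integral>z. z \<partial>distr ?M \<gamma> (\<lambda>zs. zs k))"
      by (rule integral_distr[symmetric, OF meas idm])
    then show ?thesis using dist \<gamma>(3) by simp
  qed
  let ?v = "(\<chi> j. if j = is ! k then \<sigma> $ (is ! k) else 0) :: real^'a"
  have X: "Xchain P e \<sigma> x0 is zs (Suc k) = Amap P e (is ! k) (Xchain P e \<sigma> x0 is zs k) + zs k *\<^sub>R ?v" for zs
    by (simp add: bmap_eq)
  have i1: "integrable ?M (\<lambda>zs. Amap P e (is ! k) (Xchain P e \<sigma> x0 is zs k))"
    by (rule integrable_bounded_linear[OF Amap_bl IH(1)])
  have i2: "integrable ?M (\<lambda>zs. zs k *\<^sub>R ?v)" using intz by simp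
  have "integrable ?M (\<lambda>zs. Xchain P e \<sigma> x0 is zs (Suc k))"
    unfolding X by (rule Bochner_Integration.integrable_add[OF i1 i2])
  moreover have "(\<integral>zs. Xchain P e \<sigma> x0 is zs (Suc k) \<partial>?M) = fold (Amap P e) (take (Suc k) is) x0"
  proof -
    have "(\<integral>zs. Xchain P e \<sigma> x0 is zs (Suc k) \<partial>?M) =
          (\<integral>zs. Amap P e (is ! k) (Xchain P e \<sigma> x0 is zs k) \<partial>?M) + (\<integral>zs. zs k *\<^sub>R ?v \<partial>?M)"
      unfolding X by (rule Bochner_Integration.integral_add[OF i1 i2])
    also have "(\<integral>zs. Amap P e (is ! k) (Xchain P e \<sigma> x0 is zs k) \<partial>?M) = Amap P e (is ! k) (fold (Amap P e) (take k is) x0)"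
      using integral_bounded_linear[OF Amap_bl IH(1)] IH(2) by simp
    also have "(\<integral>zs. zs k *\<^sub>R ?v \<partial>?M) = 0" using intz intz0 by simp
    also have "Amap P e (is ! k) (fold (Amap P e) (take k is) x0) + 0 = fold (Amap P e) (take (Suc k) is) x0"
      using kl by (simp add: take_Suc_conv_app_nth)
    finally show ?thesis .
  qed
  ultimately show ?case by blast
qed

lemma EZ_X_eq:
  fixes \<gamma> :: "real measure"
  assumes \<gamma>: "prob_space \<gamma>" "integrable \<gamma> (\<lambda>z. z)" "(\<integral>z. z \<partial>\<gamma>) = 0"
    and k: "length is = k"
  shows "EZ_X P e \<sigma> \<gamma> x0 is k = fold (Amap P e) is x0"
  using Xchain_int[OF \<gamma>, of k "is" P e \<sigma> x0] k unfolding EZ_X_def by simp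



theorem lemma3p3:
  fixes P :: "real^'n^'n" and e \<sigma> :: "real^'n" and \<gamma> :: "real measure"
    and \<nu> :: "(real^'n) measure" and \<delta> n :: real and Y0 :: "real^'n"
  assumes d2: "CARD('n) \<ge> 2"
    and P: "transition_matrix P" "irreducible_no_loops P"
    and e: "\<forall>i. 0 < e $ i \<and> e $ i < 1"
    and \<sigma>: "\<forall>i. 0 < \<sigma> $ i"
    and \<gamma>: "prob_space \<gamma>" "sets \<gamma> = sets borel" "absolutely_continuous lborel \<gamma>"
       "integrable \<gamma> (\<lambda>z. z)" "(\<integral>z. z \<partial>\<gamma>) = 0"
    and \<nu>: "prob_space \<nu>" "sets \<nu> = sets borel" "emeasure \<nu> Spos = 1"
       "\<forall>y\<in>Spos. weak_conv_vec (\<lambda>k. distr (measure_pmf (Ilaw k)) borel (\<lambda>is. Ychain P e is y)) \<nu>"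
    and \<delta>: "\<delta> > 0"
    and Y0: "norm Y0 = 1" "\<forall>i. Y0 $ i > \<delta>"
  shows "\<exists>c>0. \<exists>K. \<forall>k\<ge>K. \<forall>t>0. \<forall>n>0.
           measure_pmf.prob (Ilaw k)
             {is. \<bar>ln (norm (EZ_X P e \<sigma> \<gamma> (n *\<^sub>R Y0) is k) / n) - real k * alpha_const P e \<nu>\<bar>
                    \<ge> t * sqrt (real k)}
           \<le> 2 * exp (- c * t\<^sup>2)"
proof -
  interpret chainloc P e \<delta> Y0
    by unfold_locales (use P e \<delta> Y0 d2 in auto)
  define \<alpha> where "\<alpha> = alpha_const P e \<nu>"
  have b: "bseq \<longlonglongrightarrow> \<alpha>" unfolding \<alpha>_def by (rule bseq_conv[OF \<nu>(1,2,4)])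
  have aB: "\<And>k. \<bar>aseq k - real k * \<alpha>\<bar> \<le> C0" by (rule aseq_linear_bound[OF b])
  have bd: "bdiff Fl Bd" using Fl_bd unfolding bdiff_def by blast
  obtain i0 :: 'n where True by simp
  have d1: "\<delta> < 1" using Y0(2) Y0_le1[of i0] by (meson less_le_trans)
  have r1: "rho \<le> 1" using Ychain_props(3,4)[of "[]" i0] by linarith
  have lnc: "ln (real CARD('n)) > 0" using d2 by simp
  have "ln \<delta> < 0" using d1 \<delta> by simp
  moreover have "ln rho \<le> 0" using r1 rho_pos by simp
  ultimately have Bpos: "Bd > 0" unfolding Bd_def using lnc by linarith
  define C1 where "C1 = C0 + 1"
  have C1: "C1 > 0" "C0 \<le> C1" unfolding C1_def C0_def by auto
  define c where "c = min (1 / (2 * Bd\<^sup>2)) (ln 2 / (4 * C1\<^sup>2))"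
  have cpos: "c > 0" unfolding c_def using Bpos C1 by simp
  have main: "measure_pmf.prob (Ilaw k)
             {is. \<bar>ln (norm (EZ_X P e \<sigma> \<gamma> (n *\<^sub>R Y0) is k) / n) - real k * \<alpha>\<bar> \<ge> t * sqrt (real k)}
           \<le> 2 * exp (- c * t\<^sup>2)" if k: "k \<ge> 1" and t: "t > 0" and n: "n > 0" for k t n
  proof -
    let ?S = "{is. \<bar>ln (norm (EZ_X P e \<sigma> \<gamma> (n *\<^sub>R Y0) is k) / n) - real k * \<alpha>\<bar> \<ge> t * sqrt (real k)}"
    let ?S' = "{is\<in>Lk k. \<bar>Fl is - real k * \<alpha>\<bar> \<ge> t * sqrt (real k)}"
    define N where "N = real (card (Lk k :: 'n list set))"
    have Npos: "N > 0" unfolding N_def using Lk_card_pos by simp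
    have eqS: "Lk k \<inter> ?S = ?S'"
    proof (intro set_eqI)
      fix xs
      show "xs \<in> Lk k \<inter> ?S \<longleftrightarrow> xs \<in> ?S'"
      proof (cases "xs \<in> Lk k")
        case True
        then have "EZ_X P e \<sigma> \<gamma> (n *\<^sub>R Y0) xs k = n *\<^sub>R fA P e xs Y0"
          using EZ_X_eq[OF \<gamma>(1,4,5), of xs k P e \<sigma> "n *\<^sub>R Y0"] by (simp add: Lk_def fA_scale)
        then have "ln (norm (EZ_X P e \<sigma> \<gamma> (n *\<^sub>R Y0) xs k) / n) = Fl xs"
          using n by (simp add: Fl_def)
        then show ?thesis using True by simp
      qed simp
    qed
    have prob: "measure_pmf.prob (Ilaw k) ?S = real (card ?S') / N"
      unfolding Ilaw_Lk measure_pmf_of_set[OF Lk_ne Lk_finite] eqS N_def ..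
    have sk: "sqrt (real k) \<ge> 1" using k by simp
    show ?thesis
    proof (cases "t * sqrt (real k) \<ge> 2 * C1")
      case True
      let ?s = "t * sqrt (real k) / 2"
      have spos: "?s > 0" using t k by simp
      have sub: "?S' \<subseteq> {xs\<in>Lk k. \<bar>Fl xs - avg k Fl\<bar> \<ge> ?s}"
      proof
        fix xs assume "xs \<in> ?S'"
        then have xs: "xs \<in> Lk k" "\<bar>Fl xs - real k * \<alpha>\<bar> \<ge> t * sqrt (real k)" by auto
        have "\<bar>avg k Fl - real k * \<alpha>\<bar> \<le> C1" using aB[of k] C1 unfolding aseq_def by linarith
        moreover have "\<bar>Fl xs - real k * \<alpha>\<bar> \<le> \<bar>Fl xs - avg k Fl\<bar> + \<bar>avg k Fl - real k * \<alpha>\<bar>"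
          using abs_triangle_ineq[of "Fl xs - avg k Fl" "avg k Fl - real k * \<alpha>"] by simp
        ultimately have "?s \<le> \<bar>Fl xs - avg k Fl\<bar>" using xs True by linarith
        then show "xs \<in> {xs\<in>Lk k. \<bar>Fl xs - avg k Fl\<bar> \<ge> ?s}" using xs by auto
      qed
      have "real (card ?S') \<le> real (card {xs\<in>Lk k. \<bar>Fl xs - avg k Fl\<bar> \<ge> ?s})"
        using sub by (intro of_nat_mono card_mono) (auto intro: finite_subset[OF _ Lk_finite])
      also have "\<dots> \<le> 2 * N * exp (- 2 * ?s\<^sup>2 / (real k * Bd\<^sup>2))"
        unfolding N_def by (rule mcdiarmid_two[OF bd Bpos _ spos]) (use k in simp)
      also have "- 2 * ?s\<^sup>2 / (real k * Bd\<^sup>2) = - (1 / (2 * Bd\<^sup>2)) * t\<^sup>2"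
        using k Bpos by (simp add: power_mult_distrib field_simps)
      also have "exp (- (1 / (2 * Bd\<^sup>2)) * t\<^sup>2) \<le> exp (- c * t\<^sup>2)"
        unfolding exp_le_cancel_iff c_def by (intro mult_right_mono) auto
      finally have "real (card ?S') \<le> 2 * N * exp (- c * t\<^sup>2)" using Npos by simp
      then show ?thesis unfolding prob \<alpha>_def[symmetric] using Npos by (simp add: field_simps)
    next
      case False
      then have "t * sqrt (real k) < 2 * C1" by simp
      moreover have "t \<le> t * sqrt (real k)" using sk t by (simp add: mult_le_cancel_left1)
      ultimately have tC: "t < 2 * C1" by linarith
      have "c * t\<^sup>2 \<le> ln 2 / (4 * C1\<^sup>2) * t\<^sup>2" unfolding c_def by (intro mult_right_mono) auto
      also have "\<dots> \<le> ln 2 / (4 * C1\<^sup>2) * (2 * C1)\<^sup>2"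
        using tC t by (intro mult_left_mono power_mono) auto
      also have "\<dots> = ln 2" using C1 by (simp add: power_mult_distrib)
      finally have "- ln 2 \<le> - c * t\<^sup>2" by simp
      then have "exp (- ln 2) \<le> exp (- c * t\<^sup>2)" by simp
      then have "1 \<le> 2 * exp (- c * t\<^sup>2)" by (simp add: exp_minus)
      moreover have "measure_pmf.prob (Ilaw k) ?S \<le> 1" by (rule measure_pmf.prob_le_1)
      ultimately show ?thesis unfolding \<alpha>_def by linarith
    qed
  qed
  show ?thesis
    by (rule exI[of _ c], intro conjI cpos exI[of _ 1] allI impI) (use main in \<open>auto simp: \<alpha>_def\<close>)
qed


end
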